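(* For every field $\mathbb{K}$, $\mathcal{G}'+\mathcal{G}'=\mathbb{K}((t^{-1}))$.
   Context: $\mathbb{K}((t^{-1}))$ is the field of formal Laurent series $\sum_{n=-\infty}^{\infty}\alpha_n t^{-n}$ over the field $\mathbb{K}$ (only finitely many nonzero $\alpha_n$ with $n<0$), with $\deg\alpha=\sup\{-n:\alpha_n\ne0\}$. Every $\alpha$ has a unique continued fraction expansion $[a_0;a_1,a_2,\dots]$ with $a_n\in\mathbb{K}[t]$, $\deg a_n\ge1$ for $n\ge1$, finite iff $\alpha\in\mathbb{K}(t)$. $a_n(\alpha)$ is the $n$-th partial quotient (when defined) and $d_n(\alpha)=\deg a_n(\alpha)$. $\mathcal{G}'=\{\alpha\in\mathbb{K}((t^{-1})): d_n(\alpha)<d_{n+1}(\alpha) \text{ for every } n\ge1 \text{ such that } a_{n+1}(\alpha) \text{ is defined}\}$. *)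

theory Defs
  imports "HOL-Computational_Algebra.Computational_Algebra"
begin

text \<open>The field K((t^-1)) is rendered as the type 'a fls of formal Laurent series in the
  variable X = t^-1 (finitely many negative powers of X = finitely many positive powers of t).
  The coefficient alpha_n of t^-n is fls_nth f n.  Polynomials in t are 'a poly, embedded via t = X^-1.\<close>

definition laurent_deg :: "'a::zero fls \<Rightarrow> int" where
  "laurent_deg f = - fls_subdegree f"

definition poly_to_laurent :: "'a::comm_ring_1 poly \<Rightarrow> 'a fls" where
  "poly_to_laurent p = (\<Sum>k\<le>degree p. fls_const (coeff p k) * fls_X_inv ^ k)"

text \<open>Polynomial (integer) part: the terms alpha_n t^-n with n \<le> 0, as a polynomial in t.\<close>
definition laurent_ipart :: "'a::zero fls \<Rightarrow> 'a poly" where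
  "laurent_ipart f = Poly (map (\<lambda>k. fls_nth f (- int k)) [0..<nat (- fls_subdegree f) + 1])"

definition laurent_fpart :: "'a::comm_ring_1 fls \<Rightarrow> 'a fls" where
  "laurent_fpart f = f - poly_to_laurent (laurent_ipart f)"

primrec cf_rem :: "'a::field fls \<Rightarrow> nat \<Rightarrow> 'a fls" where
  "cf_rem f 0 = f"
| "cf_rem f (Suc n) = inverse (laurent_fpart (cf_rem f n))"

text \<open>a_n(alpha) is defined iff the expansion has not terminated before step n.\<close>
definition pq_defined :: "'a::field fls \<Rightarrow> nat \<Rightarrow> bool" where
  "pq_defined f n \<longleftrightarrow> (\<forall>k<n. laurent_fpart (cf_rem f k) \<noteq> 0)"

definition partial_quotient :: "'a::field fls \<Rightarrow> nat \<Rightarrow> 'a poly" where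
  "partial_quotient f n = laurent_ipart (cf_rem f n)"

definition pq_deg :: "'a::field fls \<Rightarrow> nat \<Rightarrow> nat" where
  "pq_deg f n = degree (partial_quotient f n)"

definition G' :: "'a::field fls set" where
  "G' = {f. \<forall>n\<ge>1. pq_defined f (n + 1) \<longrightarrow> pq_deg f n < pq_deg f (n + 1)}"

end

theory Submission
  imports Defs
begin

unbundle fps_syntax



lemma ipart_coeff: "coeff (laurent_ipart f) k = f $$ (- int k)"
proof -
  define L where "L = nat (- fls_subdegree f) + 1"
  have "coeff (laurent_ipart f) k = nth_default 0 (map (\<lambda>k. f $$ (- int k)) [0..<L]) k"
    unfolding laurent_ipart_def L_def by simp
  also have "\<dots> = f $$ (- int k)"
  proof (cases "k < L")
    case True thus ?thesis by (simp add: nth_default_def)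
  next
    case False
    hence "- int k < fls_subdegree f" unfolding L_def by linarith
    thus ?thesis using False by (simp add: nth_default_def)
  qed
  finally show ?thesis .
qed

lemma poly_to_laurent_nth:
  "poly_to_laurent (p :: 'a::comm_ring_1 poly) $$ n = (if n \<le> 0 then coeff p (nat (- n)) else 0)"
proof -
  have "poly_to_laurent p $$ n = (\<Sum>k\<le>degree p. coeff p k * (if n = - int k then 1 else 0))"
    unfolding poly_to_laurent_def by (simp add: fls_nth_sum)
  also have "\<dots> = (\<Sum>k\<le>degree p. if k = nat (-n) then (if n \<le> 0 then coeff p k else 0) else 0)"
    by (intro sum.cong) auto
  also have "\<dots> = (if n \<le> 0 then coeff p (nat (- n)) else 0)"
    by (simp add: sum.delta coeff_eq_0)
  finally show ?thesis .
qed

lemma fpart_nth: "laurent_fpart (f :: 'a::comm_ring_1 fls) $$ n = (if 0 < n then f $$ n else 0)"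
  unfolding laurent_fpart_def by (simp add: poly_to_laurent_nth ipart_coeff)

lemma degree_ipart_inverse:
  fixes w :: "'a::field fls"
  assumes "w \<noteq> 0" "fls_subdegree w \<ge> 1"
  shows "degree (laurent_ipart (inverse w)) = nat (fls_subdegree w)"
proof -
  let ?d = "nat (fls_subdegree w)"
  have sd: "fls_subdegree (inverse w) = - int ?d" using assms by simp
  have nz: "inverse w \<noteq> 0" using assms by simp
  have "coeff (laurent_ipart (inverse w)) ?d \<noteq> 0"
    unfolding ipart_coeff using nz sd nth_fls_subdegree_nonzero[OF nz] by simp
  moreover have "\<forall>k>?d. coeff (laurent_ipart (inverse w)) k = 0"
    unfolding ipart_coeff using sd by auto
  ultimately show ?thesis
    by (metis le_degree leading_coeff_0_iff linorder_neqE_nat degree_le le_less_linear order_antisym)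
qed




definition wseq :: "'a::field fls \<Rightarrow> nat \<Rightarrow> 'a fls" where
  "wseq g n = laurent_fpart (cf_rem g n)"

lemma wseq_0: "wseq g 0 = laurent_fpart g" by (simp add: wseq_def)
lemma wseq_Suc: "wseq g (Suc n) = laurent_fpart (inverse (wseq g n))"
  by (simp add: wseq_def)

lemma wseq_nonpos [simp]: "k \<le> 0 \<Longrightarrow> wseq g n $$ k = 0"
  by (simp add: wseq_def fpart_nth)

lemma wseq_subdeg: "wseq g n \<noteq> 0 \<Longrightarrow> fls_subdegree (wseq g n) \<ge> 1"
  by (metis nth_fls_subdegree_nonzero wseq_nonpos not_le zle_add1_eq_le add_0)

definition dd :: "'a::field fls \<Rightarrow> nat \<Rightarrow> nat" where
  "dd g n = nat (fls_subdegree (wseq g n))"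

definition DD :: "'a::field fls \<Rightarrow> nat \<Rightarrow> nat" where
  "DD g n = (\<Sum>k<n. dd g k)"

lemma DD_Suc: "DD g (Suc n) = DD g n + dd g n" by (simp add: DD_def)
lemma DD_0 [simp]: "DD g 0 = 0" by (simp add: DD_def)
lemma DD_mono: "m \<le> n \<Longrightarrow> DD g m \<le> DD g n"
  unfolding DD_def by (rule sum_mono2) auto

definition lc :: "'a::zero fls \<Rightarrow> 'a" where "lc w = w $$ fls_subdegree w"

definition UU :: "'a::field fls \<Rightarrow> nat \<Rightarrow> 'a" where
  "UU g n = (\<Prod>k<n. - inverse ((lc (wseq g k))\<^sup>2))"

lemma UU_Suc: "UU g (Suc n) = UU g n * (- inverse ((lc (wseq g n))\<^sup>2))"
  by (simp add: UU_def)

lemma UU_nz: "(\<forall>k<n. wseq g k \<noteq> 0) \<Longrightarrow> UU g n \<noteq> 0"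
  by (induction n) (auto simp: UU_def lc_def)

lemma prod_low:
  fixes A B :: "'a::field fls"
  assumes "\<forall>k<a. A $$ k = 0" "\<forall>k<b. B $$ k = 0"
  shows "\<forall>k<a+b. (A*B) $$ k = 0" "(A*B) $$ (a+b) = A $$ a * B $$ b"
proof -
  have "(\<forall>k<a+b. (A*B) $$ k = 0) \<and> ((A*B) $$ (a+b) = A $$ a * B $$ b)"
  proof (cases "A = 0 \<or> B = 0")
    case True thus ?thesis by auto
  next
    case False
    hence nz: "A \<noteq> 0" "B \<noteq> 0" by auto
    have sa: "a \<le> fls_subdegree A" using assms(1) nz by (intro fls_subdegree_geI) auto
    have sb: "b \<le> fls_subdegree B" using assms(2) nz by (intro fls_subdegree_geI) auto
    have low: "\<forall>k<a+b. (A*B) $$ k = 0" using sa sb by (auto intro: fls_times_nth_eq0)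
    have top: "(A*B) $$ (a+b) = A $$ a * B $$ b"
    proof (cases "a = fls_subdegree A \<and> b = fls_subdegree B")
      case True
      thus ?thesis using fls_times_nth(4)[of A B "a+b"] by simp
    next
      case False
      hence "a < fls_subdegree A \<or> b < fls_subdegree B" using sa sb by auto
      thus ?thesis using fls_times_nth_eq0[of "a+b" A B] sa sb by auto
    qed
    show ?thesis using low top by auto
  qed
  thus "\<forall>k<a+b. (A*B) $$ k = 0" "(A*B) $$ (a+b) = A $$ a * B $$ b" by auto
qed

lemma inv_low:
  fixes w :: "'a::field fls"
  assumes "w \<noteq> 0"
  shows "\<forall>k < - fls_subdegree w. inverse w $$ k = 0" "inverse w $$ (- fls_subdegree w) = inverse (lc w)"
  using assms by (auto simp: fls_inverse_base lc_def)

lemma approxL: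
  fixes g g' :: "'a::field fls" and M :: int
  assumes agr: "\<forall>k<M. g' $$ k = g $$ k"
  shows "(\<forall>k<n. wseq g k \<noteq> 0) \<Longrightarrow> 2 * int (DD g n) < M \<Longrightarrow>
    (\<forall>k<n. wseq g' k \<noteq> 0 \<and> dd g' k = dd g k) \<and>
    (\<forall>p < M - 2 * int (DD g n). wseq g' n $$ p = wseq g n $$ p) \<and>
    wseq g' n $$ (M - 2 * int (DD g n)) - wseq g n $$ (M - 2 * int (DD g n))
      = UU g n * (g' $$ M - g $$ M)"
proof (induction n)
  case 0
  show ?case using agr 0 by (simp add: wseq_0 fpart_nth UU_def)
next
  case (Suc n)
  have Dle: "DD g n \<le> DD g (Suc n)" by (simp add: DD_Suc)
  have IH: "(\<forall>k<n. wseq g' k \<noteq> 0 \<and> dd g' k = dd g k) \<and>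
    (\<forall>p < M - 2 * int (DD g n). wseq g' n $$ p = wseq g n $$ p) \<and>
    wseq g' n $$ (M - 2 * int (DD g n)) - wseq g n $$ (M - 2 * int (DD g n))
      = UU g n * (g' $$ M - g $$ M)"
    using Suc Dle by auto
  define a where "a = wseq g n"
  define b where "b = wseq g' n"
  define s where "s = M - 2 * int (DD g n)"
  have anz: "a \<noteq> 0" using Suc.prems a_def by auto
  define d where "d = fls_subdegree a"
  have d1: "d \<ge> 1" using wseq_subdeg anz a_def d_def by auto
  have ddn: "int (dd g n) = d" using d1 by (simp add: dd_def d_def a_def)
  have s2d: "s > 2 * d" using Suc.prems(2) ddn by (simp add: DD_Suc s_def)
  have agab: "\<forall>p<s. b $$ p = a $$ p" using IH a_def b_def s_def by auto
  have "b $$ d = a $$ d" using agab s2d d1 by auto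
  hence bd: "b $$ d \<noteq> 0" using anz d_def by simp
  hence bnz: "b \<noteq> 0" by auto
  have sdb: "fls_subdegree b = d"
  proof (rule fls_subdegree_eqI[OF bd])
    fix k assume "k < d" thus "b $$ k = 0" using agab s2d d1 d_def by auto
  qed
  have lcab: "lc b = lc a" using sdb d_def \<open>b $$ d = a $$ d\<close> by (simp add: lc_def)
  have "dd g' n = nat d" using sdb by (simp add: dd_def b_def[symmetric])
  hence ddn': "dd g' n = dd g n" using ddn by linarith
  have part1: "\<forall>k<Suc n. wseq g' k \<noteq> 0 \<and> dd g' k = dd g k"
    using IH bnz b_def ddn' by (auto simp: less_Suc_eq)
  have DDeq: "2 * int (DD g (Suc n)) = 2 * int (DD g n) + 2 * d" using ddn by (simp add: DD_Suc)
  define \<Delta> where "\<Delta> = a - b"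
  have Dlow: "\<forall>k<s. \<Delta> $$ k = 0" using agab by (simp add: \<Delta>_def)
  have Dtop: "\<Delta> $$ s = - (UU g n * (g' $$ M - g $$ M))" using IH unfolding \<Delta>_def a_def b_def s_def fls_minus_nth by (metis minus_diff_eq)
  have ia: "\<forall>k < -d. inverse a $$ k = 0" "inverse a $$ (-d) = inverse (lc a)"
    using inv_low[OF anz] d_def by auto
  have ib: "\<forall>k < -d. inverse b $$ k = 0" "inverse b $$ (-d) = inverse (lc a)"
    using inv_low[OF bnz] sdb lcab by auto
  have P1: "\<forall>k<s + -d. (\<Delta> * inverse a) $$ k = 0" "(\<Delta> * inverse a) $$ (s + -d) = \<Delta> $$ s * inverse (lc a)"
    using prod_low[OF Dlow ia(1)] ia(2) by auto
  have P2: "\<forall>k<(s + -d) + -d. (\<Delta> * inverse a * inverse b) $$ k = 0"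
     "(\<Delta> * inverse a * inverse b) $$ ((s + -d) + -d) = \<Delta> $$ s * inverse (lc a) * inverse (lc a)"
    using prod_low[OF P1(1) ib(1)] P1(2) ib(2) by auto
  have idiff: "inverse b - inverse a = \<Delta> * inverse a * inverse b"
    using anz bnz by (simp add: \<Delta>_def field_simps)
  have w'eq: "wseq g' (Suc n) $$ p - wseq g (Suc n) $$ p = (if 0 < p then (\<Delta> * inverse a * inverse b) $$ p else 0)" for p
    by (simp add: wseq_Suc fpart_nth a_def[symmetric] b_def[symmetric] idiff[symmetric])
  have snew: "M - 2 * int (DD g (Suc n)) = s + -d + -d" using DDeq s_def by simp
  have part2: "\<forall>p < M - 2 * int (DD g (Suc n)). wseq g' (Suc n) $$ p = wseq g (Suc n) $$ p"
  proof (intro allI impI)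
    fix p assume "p < M - 2 * int (DD g (Suc n))"
    thus "wseq g' (Suc n) $$ p = wseq g (Suc n) $$ p"
      using w'eq[of p] P2(1) snew by (auto split: if_splits)
  qed
  have pos: "0 < s + -d + -d" using s2d by simp
  have part3: "wseq g' (Suc n) $$ (M - 2 * int (DD g (Suc n))) - wseq g (Suc n) $$ (M - 2 * int (DD g (Suc n)))
      = UU g (Suc n) * (g' $$ M - g $$ M)"
  proof -
    have "wseq g' (Suc n) $$ (s + -d + -d) - wseq g (Suc n) $$ (s + -d + -d) = \<Delta> $$ s * inverse (lc a) * inverse (lc a)"
      using pos P2(2) w'eq[of "s + -d + -d"] by simp
    also have "\<dots> = UU g (Suc n) * (g' $$ M - g $$ M)"
      unfolding Dtop UU_Suc a_def[symmetric] power2_eq_square inverse_mult_distrib by (simp add: algebra_simps)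
    finally show ?thesis unfolding snew .
  qed
  show ?case using part1 part2 part3 by blast
qed




datatype st = Fo nat nat nat | Fr nat nat nat

fun nxt :: "st \<Rightarrow> bool \<Rightarrow> st" where
  "nxt (Fo n j dp) ag = (if ag then Fo n (j+1) dp else Fr n j j)"
| "nxt (Fr n k d) ag = (if 1 < k then Fr n (k-1) d else Fo (n+1) 1 d)"

fun agf :: "'a::field fls \<Rightarrow> st \<Rightarrow> bool" where
  "agf g (Fo n j dp) = (wseq g n $$ int j = 0)"
| "agf g (Fr n k d) = True"

primrec stf :: "'a::field fls \<Rightarrow> nat \<Rightarrow> st" where
  "stf g 0 = Fo 0 1 0"
| "stf g (Suc i) = nxt (stf g i) (agf g (stf g i))"

definition dpv :: "'a::field fls \<Rightarrow> nat \<Rightarrow> nat" where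
  "dpv g n = (if n = 0 then 0 else dd g (n-1))"

fun semok :: "'a::field fls \<Rightarrow> nat \<Rightarrow> st \<Rightarrow> bool" where
  "semok g i (Fo n j dp) = ((\<forall>k<n. wseq g k \<noteq> 0) \<and> int i + 1 = 2 * int (DD g n) + int j \<and> 1 \<le> j
      \<and> (\<forall>p<int j. wseq g n $$ p = 0) \<and> dp = dpv g n)"
| "semok g i (Fr n k d) = ((\<forall>m<Suc n. wseq g m \<noteq> 0) \<and> d = dd g n \<and> 1 \<le> k \<and> k \<le> d
      \<and> int i + 1 = 2 * int (DD g n) + 2 * int d - int k + 1)"

lemma sem: "semok g i (stf g i)"
proof (induction i)
  case 0
  show ?case by (simp add: dpv_def)
next
  case (Suc i)
  show ?case
  proof (cases "stf g i")
    case (Fo n j dp)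
    note S = Suc.IH[unfolded Fo semok.simps]
    show ?thesis
    proof (cases "wseq g n $$ int j = 0")
      case True
      have "\<forall>p<int (j+1). wseq g n $$ p = 0"
      proof (intro allI impI)
        fix p :: int assume "p < int (j+1)"
        hence "p < int j \<or> p = int j" by linarith
        thus "wseq g n $$ p = 0" using S True by auto
      qed
      thus ?thesis using Fo True S by simp
    next
      case False
      have nz: "wseq g n \<noteq> 0" using False by auto
      have sd: "fls_subdegree (wseq g n) = int j" using S False by (intro fls_subdegree_eqI) auto
      hence "dd g n = j" by (simp add: dd_def)
      thus ?thesis using Fo False S nz by (auto simp: less_Suc_eq)
    qed
  next
    case (Fr n k d)
    note S = Suc.IH[unfolded Fr semok.simps]
    show ?thesis
    proof (cases "1 < k")
      case True thus ?thesis using Fr S by auto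
    next
      case False
      hence "k = 1" using S by auto
      thus ?thesis using Fr S by (auto simp: DD_Suc dpv_def)
    qed
  qed
qed

lemma sem_Fo: "stf g i = Fo n j dp \<Longrightarrow> (\<forall>k<n. wseq g k \<noteq> 0) \<and> int i + 1 = 2 * int (DD g n) + int j \<and> 1 \<le> j
      \<and> (\<forall>p<int j. wseq g n $$ p = 0) \<and> dp = dpv g n"
  using sem[of g i] by simp

lemma sem_Fr: "stf g i = Fr n k d \<Longrightarrow> (\<forall>m<Suc n. wseq g m \<noteq> 0) \<and> d = dd g n \<and> 1 \<le> k \<and> k \<le> d
      \<and> int i + 1 = 2 * int (DD g n) + 2 * int d - int k + 1"
  using sem[of g i] by simp

lemma loc: "\<forall>k \<le> int i. g' $$ k = g $$ k \<Longrightarrow> stf g' i = stf g i"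
proof (induction i)
  case 0 show ?case by simp
next
  case (Suc i)
  have IH: "stf g' i = stf g i" using Suc by auto
  show ?case
  proof (cases "stf g i")
    case (Fo n j dp)
    note S = sem_Fo[OF Fo]
    have agr: "\<forall>k< int i + 2. g' $$ k = g $$ k" using Suc.prems by auto
    have "wseq g' n $$ int j = wseq g n $$ int j"
      using approxL[OF agr, of n] S by auto
    thus ?thesis using IH Fo by simp
  next
    case (Fr n k d)
    thus ?thesis using IH by simp
  qed
qed

definition av :: "'a::field fls \<Rightarrow> nat \<Rightarrow> 'a" where
  "av g i = (case stf g i of Fo n j dp \<Rightarrow> g $$ (int i + 1) - wseq g n $$ int j / UU g n | Fr _ _ _ \<Rightarrow> 0)"

lemma av_agree:
  assumes st: "stf g i = Fo n j dp" and agr: "\<forall>k \<le> int i. g' $$ k = g $$ k" and c: "g' $$ (int i + 1) = av g i"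
  shows "stf g' i = Fo n j dp" "wseq g' n $$ int j = 0"
proof -
  show "stf g' i = Fo n j dp" using loc[OF agr] st by simp
  note S = sem_Fo[OF st]
  have agr': "\<forall>k< int i + 1. g' $$ k = g $$ k" using agr by auto
  have U: "UU g n \<noteq> 0" using UU_nz S by auto
  have "wseq g' n $$ int j - wseq g n $$ int j = UU g n * (g' $$ (int i + 1) - g $$ (int i + 1))"
    using approxL[OF agr', of n] S by auto
  also have "\<dots> = - wseq g n $$ int j" using c U by (simp add: av_def st)
  finally show "wseq g' n $$ int j = 0" by simp
qed




fun isNA :: "st \<Rightarrow> bool" where
  "isNA (Fo n j dp) = (j \<le> dp)" | "isNA (Fr n k d) = False"

fun isFo :: "st \<Rightarrow> bool" where
  "isFo (Fo n j dp) = True" | "isFo (Fr n k d) = False"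

fun wf :: "st \<Rightarrow> bool" where
  "wf (Fo n j dp) = (1 \<le> j)" | "wf (Fr n k d) = (1 \<le> k \<and> k \<le> d)"

fun inv1 :: "st \<Rightarrow> st \<Rightarrow> bool" where
  "inv1 (Fo n j dp) (Fo n' j' dq) = (\<not>(j \<le> dp \<and> j' \<le> dq) \<and> (j \<le> dp \<longrightarrow> dp \<le> j' + j))"
| "inv1 (Fo n j dp) (Fr n' k d) = True"
| "inv1 (Fr n k d) (Fo n' j' dq) = (if j' \<le> dq then dq + 1 \<le> k + j' \<and> d \<le> j' + k + 1 else d \<le> j' + k + 1)"
| "inv1 (Fr n k d) (Fr n' k' d') = False"

definition Inv :: "st \<Rightarrow> st \<Rightarrow> bool" where
  "Inv s t = (wf s \<and> wf t \<and> inv1 s t \<and> inv1 t s)"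

lemma Inv_init: "Inv (Fo 0 1 0) (Fo 0 1 0)" by (simp add: Inv_def)

lemma Inv_step:
  assumes "Inv sy sz" "isFo sy \<and> \<not> isNA sz \<longrightarrow> ay" "\<not> (isFo sy \<and> \<not> isNA sz) \<longrightarrow> az"
  shows "Inv (nxt sy ay) (nxt sz az)"
  using assms unfolding Inv_def
  by (cases sy; cases sz; auto split: if_splits)

lemma legal_step:
  assumes "Inv sy sz" "isFo sy \<and> \<not> isNA sz \<longrightarrow> ay" "\<not> (isFo sy \<and> \<not> isNA sz) \<longrightarrow> az"
  shows "sy = Fo n j dp \<Longrightarrow> \<not> ay \<Longrightarrow> dp < j" "sz = Fo n j dp \<Longrightarrow> \<not> az \<Longrightarrow> dp < j"
  using assms unfolding Inv_def
  by (cases sy; cases sz; auto split: if_splits)+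




definition ch :: "'a::field fls \<Rightarrow> 'a fls \<Rightarrow> nat \<Rightarrow> 'a" where
  "ch x0 t i = (if isFo (stf t i) \<and> \<not> isNA (stf (x0 - t) i) then av t i
               else x0 $$ (int i + 1) - av (x0 - t) i)"

primrec pref :: "'a::field fls \<Rightarrow> nat \<Rightarrow> 'a fls" where
  "pref x0 0 = 0"
| "pref x0 (Suc i) = pref x0 i + fls_const (ch x0 (pref x0 i) i) * fls_X ^ (Suc i)"

lemma pref_nth: "pref x0 i $$ k = (if 1 \<le> k \<and> k \<le> int i then pref x0 (nat k) $$ k else 0)"
proof (induction i arbitrary: k)
  case 0 show ?case by simp
next
  case (Suc i)
  show ?case
  proof (cases "k = int i + 1")
    case True
    have "nat k = Suc i" using True by simp
    thus ?thesis using True by auto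
  next
    case False
    hence "pref x0 (Suc i) $$ k = pref x0 i $$ k" by (simp del: power_Suc)
    thus ?thesis using Suc[of k] False by auto
  qed
qed

lemma pref_new: "pref x0 (Suc i) $$ (int i + 1) = ch x0 (pref x0 i) i"
  using pref_nth[of x0 i "int i + 1"] by (simp del: power_Suc)

definition ycon :: "'a::field fls \<Rightarrow> 'a fls" where
  "ycon x0 = fps_to_fls (Abs_fps (\<lambda>k. if k = 0 then 0 else pref x0 k $$ int k))"

lemma ycon_nth: "ycon x0 $$ k = (if 1 \<le> k then pref x0 (nat k) $$ k else 0)"
  by (auto simp: ycon_def)

lemma ycon_agr: "\<forall>k \<le> int i. ycon x0 $$ k = pref x0 i $$ k"
  using pref_nth[of x0 i] by (auto simp: ycon_nth)

lemma ycon_new: "ycon x0 $$ (int i + 1) = ch x0 (pref x0 i) i"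
proof -
  have "nat (int i + 1) = Suc i" by simp
  thus ?thesis using pref_new[of x0 i] by (simp only: ycon_nth) simp
qed

definition legal :: "'a::field fls \<Rightarrow> nat \<Rightarrow> bool" where
  "legal g i = (\<forall>n j dp. stf g i = Fo n j dp \<longrightarrow> wseq g n $$ int j \<noteq> 0 \<longrightarrow> dp < j)"

lemma main_step:
  fixes x0 :: "'a::field fls"
  defines "y \<equiv> ycon x0"
  assumes I: "Inv (stf y i) (stf (x0 - y) i)"
  shows "Inv (stf y (Suc i)) (stf (x0 - y) (Suc i)) \<and> legal y i \<and> legal (x0 - y) i"
proof -
  define t where "t = pref x0 i"
  define z where "z = x0 - y"
  have agy: "\<forall>k \<le> int i. y $$ k = t $$ k" using ycon_agr y_def t_def by auto
  have agz: "\<forall>k \<le> int i. z $$ k = (x0 - t) $$ k" using agy z_def by auto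
  have sy: "stf y i = stf t i" using loc[OF agy] .
  have sz: "stf z i = stf (x0 - t) i" using loc[OF agz] .
  define ay where "ay = agf y (stf y i)"
  define az where "az = agf z (stf z i)"
  have yc: "y $$ (int i + 1) = ch x0 t i" using ycon_new y_def t_def by auto
  have c1: "isFo (stf y i) \<and> \<not> isNA (stf z i) \<longrightarrow> ay"
  proof
    assume A: "isFo (stf y i) \<and> \<not> isNA (stf z i)"
    then obtain n j dp where F: "stf t i = Fo n j dp" using sy by (cases "stf t i") auto
    have "y $$ (int i + 1) = av t i" using yc A sy sz by (simp add: ch_def)
    hence "wseq y n $$ int j = 0" using av_agree[OF F agy] by auto
    thus ay using F sy by (simp add: ay_def)
  qed
  have c2: "\<not> (isFo (stf y i) \<and> \<not> isNA (stf z i)) \<longrightarrow> az"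
  proof
    assume A: "\<not> (isFo (stf y i) \<and> \<not> isNA (stf z i))"
    have zc: "z $$ (int i + 1) = av (x0 - t) i" using yc A sy sz unfolding ch_def z_def by (auto split: if_splits)
    show az
    proof (cases "stf z i")
      case (Fo n j dp)
      hence F: "stf (x0 - t) i = Fo n j dp" using sz by simp
      have "wseq z n $$ int j = 0" using av_agree[OF F agz zc] by auto
      thus ?thesis using Fo by (simp add: az_def)
    next
      case (Fr n k d) thus ?thesis by (simp add: az_def)
    qed
  qed
  have I': "Inv (stf y i) (stf z i)" using I z_def by simp
  have "Inv (nxt (stf y i) ay) (nxt (stf z i) az)" using Inv_step[OF I' c1 c2] .
  moreover have "stf y (Suc i) = nxt (stf y i) ay" "stf z (Suc i) = nxt (stf z i) az"
    by (simp_all add: ay_def az_def)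
  moreover have "legal y i"
    unfolding legal_def using legal_step(1)[OF I' c1 c2] by (auto simp: ay_def)
  moreover have "legal z i"
    unfolding legal_def using legal_step(2)[OF I' c1 c2] by (auto simp: az_def)
  ultimately show ?thesis using z_def by simp
qed

lemma main_all:
  fixes x0 :: "'a::field fls"
  shows "legal (ycon x0) i \<and> legal (x0 - ycon x0) i"
proof -
  have "Inv (stf (ycon x0) i) (stf (x0 - ycon x0) i)"
    by (induction i) (use Inv_init main_step in auto)
  thus ?thesis using main_step by blast
qed




lemma cf_rem_Suc_w: "cf_rem f (Suc m) = inverse (wseq f m)"
  by (simp add: wseq_def)

lemma pq_deg_Suc: "wseq f m \<noteq> 0 \<Longrightarrow> pq_deg f (Suc m) = dd f m"
  unfolding pq_deg_def partial_quotient_def cf_rem_Suc_w dd_def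
  using degree_ipart_inverse wseq_subdeg by (metis)

lemma G'_char: "f \<in> G' \<longleftrightarrow> (\<forall>m. (\<forall>k<m+2. wseq f k \<noteq> 0) \<longrightarrow> dd f m < dd f (Suc m))"
proof -
  have pd: "pq_defined f n = (\<forall>k<n. wseq f k \<noteq> 0)" for n by (simp add: pq_defined_def wseq_def)
  show ?thesis
  proof
    assume A: "f \<in> G'"
    show "\<forall>m. (\<forall>k<m+2. wseq f k \<noteq> 0) \<longrightarrow> dd f m < dd f (Suc m)"
    proof (intro allI impI)
      fix m assume B: "\<forall>k<m+2. wseq f k \<noteq> 0"
      have "pq_defined f (Suc m + 1)" using B pd by simp
      moreover have "\<forall>n\<ge>1. pq_defined f (n + 1) \<longrightarrow> pq_deg f n < pq_deg f (n + 1)"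
        using A unfolding G'_def by (rule CollectD)
      ultimately have "pq_deg f (Suc m) < pq_deg f (Suc m + 1)" by simp
      thus "dd f m < dd f (Suc m)" using B pq_deg_Suc[of f m] pq_deg_Suc[of f "Suc m"] by simp
    qed
  next
    assume A: "\<forall>m. (\<forall>k<m+2. wseq f k \<noteq> 0) \<longrightarrow> dd f m < dd f (Suc m)"
    show "f \<in> G'" unfolding G'_def
    proof (intro CollectI allI impI)
      fix n :: nat assume n1: "n \<ge> 1" and B: "pq_defined f (n+1)"
      then obtain m where m: "n = Suc m" by (cases n) auto
      have B': "\<forall>k<m+2. wseq f k \<noteq> 0" using B m pd by simp
      show "pq_deg f n < pq_deg f (n+1)"
        using A B' pq_deg_Suc[of f m] pq_deg_Suc[of f "Suc m"] m by simp
    qed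
  qed
qed

lemma wseq_cong: "wseq f 0 = wseq g 0 \<Longrightarrow> wseq f n = wseq g n"
  by (induction n) (simp_all add: wseq_Suc)

lemma dd_pos: "wseq g n \<noteq> 0 \<Longrightarrow> dd g n \<ge> 1"
  using wseq_subdeg[of g n] by (simp add: dd_def)

lemma legal_G':
  assumes L: "\<forall>i. legal g i"
  shows "g \<in> G'"
  unfolding G'_char
proof (intro allI impI)
  fix m assume B: "\<forall>k<m+2. wseq g k \<noteq> 0"
  define N where "N = Suc m"
  define d where "d = dd g N"
  have wN: "wseq g N \<noteq> 0" using B N_def by simp
  have d1: "d \<ge> 1" using dd_pos[OF wN] d_def by simp
  define i where "i = 2 * DD g N + d - 1"
  have pos: "int i + 1 = 2 * int (DD g N) + int d" using d1 by (simp add: i_def)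
  have DSN: "DD g (Suc N) = DD g N + d" by (simp add: DD_Suc d_def)
  have st: "stf g i = Fo N d (dd g m)"
  proof (cases "stf g i")
    case (Fo n' j dp)
    note S = sem_Fo[OF Fo]
    have "n' = N"
    proof (rule ccontr)
      assume ne: "n' \<noteq> N"
      show False
      proof (cases "n' < N")
        case True
        have wn': "wseq g n' \<noteq> 0" using B True N_def by simp
        have "int j \<le> fls_subdegree (wseq g n')" using S wn' by (intro fls_subdegree_geI) auto
        hence jle: "j \<le> dd g n'" by (simp add: dd_def)
        have "dd g n' \<ge> 1" using dd_pos[OF wn'] .
        moreover have "DD g (Suc n') \<le> DD g N" using True by (intro DD_mono) simp
        ultimately show False using S pos jle DD_Suc[of g n'] by linarith
      next
        case False
        hence "Suc N \<le> n'" using ne by simp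
        hence "DD g (Suc N) \<le> DD g n'" by (rule DD_mono)
        thus False using S pos DSN by linarith
      qed
    qed
    hence "int j = int d" using S pos by simp
    hence jd: "j = d" by simp
    have "dp = dd g m" using S \<open>n' = N\<close> by (simp add: dpv_def N_def)
    thus ?thesis using Fo jd \<open>n' = N\<close> by simp
  next
    case (Fr n' k d')
    note S = sem_Fr[OF Fr]
    have False
    proof (cases n' N rule: linorder_cases)
      case less
      have "DD g (Suc n') \<le> DD g N" using less by (intro DD_mono) simp
      thus False using S pos DD_Suc[of g n'] d1 by linarith
    next
      case equal
      hence "d' = d" using S d_def by simp
      moreover have "DD g n' = DD g N" using equal by simp
      ultimately show False using S pos by linarith
    next
      case greater
      hence "DD g (Suc N) \<le> DD g n'" by (intro DD_mono) simp
      thus False using S pos DSN by linarith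
    qed
    thus ?thesis ..
  qed
  have "wseq g N $$ int d \<noteq> 0"
  proof -
    have "fls_subdegree (wseq g N) = int d" using wseq_subdeg[OF wN] unfolding d_def dd_def by simp
    thus ?thesis using nth_fls_subdegree_nonzero[OF wN] by simp
  qed
  moreover have "legal g i" using L by blast
  ultimately have "dd g m < d" using st unfolding legal_def by simp
  thus "dd g m < dd g (Suc m)" using d_def N_def by simp
qed

theorem theorem1p4:
  fixes \<alpha> :: "'a::field fls"
  shows "\<exists>\<beta> \<gamma>. \<beta> \<in> G' \<and> \<gamma> \<in> G' \<and> \<alpha> = \<beta> + \<gamma>"
proof -
  define x0 where "x0 = laurent_fpart \<alpha>"
  define y where "y = ycon x0"
  define z where "z = x0 - y"
  have Ly: "\<forall>i. legal y i" and Lz: "\<forall>i. legal z i" using main_all[of x0] y_def z_def by auto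
  have zG: "z \<in> G'" using legal_G'[OF Lz] .
  have yG: "y \<in> G'" using legal_G'[OF Ly] .
  define \<beta> where "\<beta> = \<alpha> - z"
  have "laurent_fpart \<beta> = laurent_fpart y"
  proof (rule fls_eqI)
    fix n show "laurent_fpart \<beta> $$ n = laurent_fpart y $$ n"
      unfolding fpart_nth \<beta>_def z_def x0_def by (simp add: fpart_nth)
  qed
  hence "wseq \<beta> n = wseq y n" for n by (metis wseq_cong wseq_0)
  hence "\<beta> \<in> G'" using yG unfolding G'_char dd_def by simp
  moreover have "\<alpha> = \<beta> + z" by (simp add: \<beta>_def)
  ultimately show ?thesis using zG by (intro exI[of _ \<beta>] exI[of _ z]) simp
qed



end
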